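(* Let $n\geq3$, let $\sigma:\mathbb{R}\to\mathbb{R}$ be an increasing odd homeomorphism, let $1\leq i<j\leq n$, and let $B\subset\mathbb{R}^n$ be such that $x_ix_j<0$ for all $x=(x_1,\dots,x_n)\in B$ and the closure of $B$ contains a point $p=(p_1,\dots,p_n)$ with $p_i=p_j=0$. Then the closure of $\mathcal M(\sigma,n)B$ contains $Q_{i,j}=\{(x_1,\dots,x_n)\in\mathbb{R}^n:x_ix_j>0\}$.
   Context: For $1\leq k<l\leq n$ define $h_{k,l},v_{k,l}:\mathbb{R}^n\to\mathbb{R}^n$ by $h_{k,l}(x)=x+\sigma^{-1}(x_l)e_k$ and $v_{k,l}(x)=x+\sigma(x_k)e_l$, where $(e_k)$ is the standard basis. $\mathcal M(\sigma,n)$ is the monoid (containing the identity) generated by all $h_{k,l},v_{k,l}$, and $\mathcal M(\sigma,n)B=\{m(x):m\in\mathcal M(\sigma,n),x\in B\}$. *)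

theory Defs
  imports "HOL-Analysis.Analysis"
begin

text \<open>R^n is represented by functions nat => real vanishing outside the index set {1..n};
 the topology is the product topology on nat => real (on this closed subspace it is the
 Euclidean one).\<close>

definition Rn :: "nat \<Rightarrow> (nat \<Rightarrow> real) set" where
  "Rn n = {x. \<forall>k. k \<notin> {1..n} \<longrightarrow> x k = 0}"

definition hmap :: "(real \<Rightarrow> real) \<Rightarrow> nat \<Rightarrow> nat \<Rightarrow> (nat \<Rightarrow> real) \<Rightarrow> (nat \<Rightarrow> real)" where
  "hmap \<sigma> k l x = x(k := x k + inv \<sigma> (x l))"

definition vmap :: "(real \<Rightarrow> real) \<Rightarrow> nat \<Rightarrow> nat \<Rightarrow> (nat \<Rightarrow> real) \<Rightarrow> (nat \<Rightarrow> real)" where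
  "vmap \<sigma> k l x = x(l := x l + \<sigma> (x k))"

inductive_set Mon :: "(real \<Rightarrow> real) \<Rightarrow> nat \<Rightarrow> ((nat \<Rightarrow> real) \<Rightarrow> (nat \<Rightarrow> real)) set"
  for \<sigma> :: "real \<Rightarrow> real" and n :: nat where
  Mon_id: "id \<in> Mon \<sigma> n"
| Mon_h: "\<lbrakk>f \<in> Mon \<sigma> n; 1 \<le> k; k < l; l \<le> n\<rbrakk> \<Longrightarrow> hmap \<sigma> k l \<circ> f \<in> Mon \<sigma> n"
| Mon_v: "\<lbrakk>f \<in> Mon \<sigma> n; 1 \<le> k; k < l; l \<le> n\<rbrakk> \<Longrightarrow> vmap \<sigma> k l \<circ> f \<in> Mon \<sigma> n"

definition MonImg :: "(real \<Rightarrow> real) \<Rightarrow> nat \<Rightarrow> (nat \<Rightarrow> real) set \<Rightarrow> (nat \<Rightarrow> real) set" where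
  "MonImg \<sigma> n B = {m x | m x. m \<in> Mon \<sigma> n \<and> x \<in> B}"

end

theory Submission imports Defs begin

definition gg :: "(real \<Rightarrow> real) \<Rightarrow> nat \<Rightarrow> nat \<Rightarrow> real \<Rightarrow> real" where
  "gg \<sigma> k l t = (if k < l then inv \<sigma> t else \<sigma> t)"

definition Aop :: "(real \<Rightarrow> real) \<Rightarrow> nat \<Rightarrow> nat \<Rightarrow> (nat \<Rightarrow> real) \<Rightarrow> (nat \<Rightarrow> real)" where
  "Aop \<sigma> k l x = x(k := x k + gg \<sigma> k l (x l))"

locale sig =
  fixes \<sigma> :: "real \<Rightarrow> real"
  assumes sm: "strict_mono \<sigma>" and odd: "\<forall>t. \<sigma> (- t) = - \<sigma> t"
    and hom: "homeomorphism UNIV UNIV \<sigma> (inv \<sigma>)"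
begin

lemma inv_l: "inv \<sigma> (\<sigma> x) = x" using hom unfolding homeomorphism_def by blast
lemma inv_r: "\<sigma> (inv \<sigma> y) = y" using hom unfolding homeomorphism_def by blast
lemma cont_s: "continuous_on UNIV \<sigma>" using hom unfolding homeomorphism_def by blast
lemma cont_i: "continuous_on UNIV (inv \<sigma>)" using hom unfolding homeomorphism_def by blast

lemma s_less: "\<sigma> x < \<sigma> y \<longleftrightarrow> x < y"
  using sm by (metis not_less_iff_gr_or_eq strict_mono_less)

lemma inv_less: "inv \<sigma> x < inv \<sigma> y \<longleftrightarrow> x < y"
  by (metis inv_r s_less)

lemma s0: "\<sigma> 0 = 0" using odd by (metis add.inverse_neutral neg_equal_zero)
lemma i0: "inv \<sigma> 0 = 0" by (metis inv_l s0)

lemma i_odd: "inv \<sigma> (- t) = - inv \<sigma> t"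
  by (metis inv_l inv_r odd)

lemma gg_less: "gg \<sigma> k l x < gg \<sigma> k l y \<longleftrightarrow> x < y"
  unfolding gg_def using s_less inv_less by auto

lemma gg0: "gg \<sigma> k l 0 = 0" unfolding gg_def using s0 i0 by auto

lemma gg_pos: "gg \<sigma> k l x > 0 \<longleftrightarrow> x > 0"
  using gg_less[of k l 0 x] gg0 by simp

lemma gg_neg: "gg \<sigma> k l x < 0 \<longleftrightarrow> x < 0"
  using gg_less[of k l x 0] gg0 by simp

lemma gg_inj: "inj (gg \<sigma> k l)"
  by (metis gg_less injI not_less_iff_gr_or_eq)

lemma gg_odd: "gg \<sigma> k l (- t) = - gg \<sigma> k l t"
  unfolding gg_def using odd i_odd by auto

lemma gg_cont: "continuous_on UNIV (gg \<sigma> k l)"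
  unfolding gg_def using cont_s cont_i by (cases "k < l") (auto simp: o_def)

lemma gg_small: "e > 0 \<Longrightarrow> \<exists>d>0. \<forall>k l t. \<bar>t\<bar> < d \<longrightarrow> \<bar>gg \<sigma> k l t\<bar> < e"
proof -
  assume e: "e > 0"
  obtain d1 where d1: "d1 > 0" "\<forall>t. dist t 0 < d1 \<longrightarrow> dist (\<sigma> t) (\<sigma> 0) < e"
    using cont_s e unfolding continuous_on_iff by blast
  obtain d2 where d2: "d2 > 0" "\<forall>t. dist t 0 < d2 \<longrightarrow> dist (inv \<sigma> t) (inv \<sigma> 0) < e"
    using cont_i e unfolding continuous_on_iff by blast
  show ?thesis
  proof (intro exI[of _ "min d1 d2"] conjI allI impI)
    show "min d1 d2 > 0" using d1 d2 by simp
    fix k l t assume "\<bar>t\<bar> < min d1 d2"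
    then have "dist t 0 < d1" "dist t 0 < d2" by (auto simp: dist_real_def)
    then show "\<bar>gg \<sigma> k l t\<bar> < e" using d1(2) d2(2) s0 i0 unfolding gg_def
      by (auto simp: dist_real_def)
  qed
qed

lemma Aop_cont: "continuous_on UNIV (Aop \<sigma> k l)"
proof (rule continuous_on_coordinatewise_then_product)
  fix i
  show "continuous_on UNIV (\<lambda>x. Aop \<sigma> k l x i)"
  proof (cases "i = k")
    case True
    have "continuous_on UNIV (\<lambda>x::nat\<Rightarrow>real. x k + gg \<sigma> k l (x l))"
      by (intro continuous_on_add continuous_on_compose2[OF gg_cont] continuous_on_product_coordinates) auto
    then show ?thesis using True unfolding Aop_def by simp
  next
    case False
    then show ?thesis unfolding Aop_def by simp
  qed
qed

lemma Aop_Mon: "f \<in> Mon \<sigma> n \<Longrightarrow> k \<in> {1..n} \<Longrightarrow> l \<in> {1..n} \<Longrightarrow> k \<noteq> l \<Longrightarrow> Aop \<sigma> k l \<circ> f \<in> Mon \<sigma> n"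
proof -
  assume f: "f \<in> Mon \<sigma> n" and kl: "k \<in> {1..n}" "l \<in> {1..n}" "k \<noteq> l"
  show ?thesis
  proof (cases "k < l")
    case True
    have "Aop \<sigma> k l = hmap \<sigma> k l" unfolding Aop_def hmap_def gg_def using True by (auto simp: fun_eq_iff)
    then show ?thesis using Mon_h[OF f, of k l] kl True by auto
  next
    case False
    then have lk: "l < k" using kl by simp
    have "Aop \<sigma> k l = vmap \<sigma> l k" unfolding Aop_def vmap_def gg_def using lk by (auto simp: fun_eq_iff)
    then show ?thesis using Mon_v[OF f, of l k] kl lk by auto
  qed
qed

end

lemma density_pos:
  fixes a b t e :: real
  assumes a: "a > 0" and b: "b < 0" and irr: "a / b \<notin> \<rat>" and e: "e > 0"
  shows "\<exists>k h :: nat. \<bar>real k * a + real h * b - t\<bar> < e"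
proof -
  define B where "B = - b"
  have B: "B > 0" using b B_def by simp
  define \<theta> where "\<theta> = a / B"
  have th: "\<theta> \<notin> \<rat>"
  proof
    assume "\<theta> \<in> \<rat>"
    then have "- \<theta> \<in> \<rat>" by simp
    moreover have "- \<theta> = a / b" unfolding \<theta>_def B_def by simp
    ultimately show False using irr by simp
  qed
  have thpos: "\<theta> > 0" unfolding \<theta>_def using a B by simp
  define J :: nat where "J = nat \<lceil>t / a\<rceil>"
  have "t / a \<le> real J" unfolding J_def by linarith
  then have "t \<le> real J * a" using a by (simp add: divide_le_eq)
  define t0 where "t0 = t - real J * a"
  have t0: "t0 \<le> 0" unfolding t0_def using \<open>t \<le> real J * a\<close> by simp
  define e' where "e' = min (e / B) (1/2)"
  have e': "e' > 0" unfolding e'_def using e B by simp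
  obtain h k where k: "k > 0" and hk: "\<bar>of_int k * \<theta> - of_int h - t0 / B\<bar> < e'"
    using sequence_of_fractional_parts_is_dense[OF th e'] by blast
  have "t0 / B \<le> 0" using t0 B by (simp add: divide_nonpos_pos)
  have "of_int k * \<theta> > 0" using k thpos by simp
  have "e' \<le> 1/2" unfolding e'_def by (rule min.cobounded2)
  have "real_of_int h > -1" using hk \<open>t0 / B \<le> 0\<close> \<open>of_int k * \<theta> > 0\<close> \<open>e' \<le> 1/2\<close> by linarith
  then have h0: "h \<ge> 0" by simp
  have "\<bar>B * (of_int k * \<theta> - of_int h - t0 / B)\<bar> < B * e'"
    using hk B by (simp add: abs_mult)
  also have "B * e' \<le> e" unfolding e'_def using B by (simp add: min_def field_simps)
  finally have 1: "\<bar>B * (of_int k * \<theta> - of_int h - t0 / B)\<bar> < e" .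
  have Bth: "B * \<theta> = a" unfolding \<theta>_def using B by simp
  have "B * (of_int k * \<theta> - of_int h - t0 / B) = of_int k * (B * \<theta>) - of_int h * B - t0"
    using B by (simp add: algebra_simps)
  also have "\<dots> = of_int k * a + of_int h * b - t0" using Bth B_def by simp
  also have "\<dots> = real (nat k + J) * a + real (nat h) * b - t"
  proof -
    have "real (nat k) = of_int k" using k by simp
    moreover have "real (nat h) = of_int h" using h0 by simp
    ultimately show ?thesis unfolding t0_def by (simp add: algebra_simps)
  qed
  finally have "\<bar>real (nat k + J) * a + real (nat h) * b - t\<bar> < e" using 1 by simp
  then show ?thesis by blast
qed

lemma density:
  fixes a b t e :: real
  assumes ab: "a * b < 0" and irr: "a / b \<notin> \<rat>" and e: "e > 0"
  shows "\<exists>k h :: nat. \<bar>real k * a + real h * b - t\<bar> < e"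
proof (cases "a > 0")
  case True
  then have "b < 0" using ab by (smt (verit) mult_nonneg_nonneg)
  then show ?thesis using density_pos[OF True _ irr e] by blast
next
  case False
  then have a: "a < 0" "b > 0" using ab by (smt (verit) mult_nonneg_nonneg mult_nonpos_nonpos)+
  have "b / a \<notin> \<rat>"
  proof
    assume "b / a \<in> \<rat>"
    then have "inverse (b / a) \<in> \<rat>" by (rule Rats_inverse)
    moreover have "inverse (b / a) = a / b" by (rule inverse_divide)
    ultimately show False using irr by simp
  qed
  from density_pos[OF a(2) a(1) this e, of t] obtain k h :: nat where
    "\<bar>real k * b + real h * a - t\<bar> < e" by blast
  then have "\<bar>real h * a + real k * b - t\<bar> < e" by (simp add: add.commute)
  then show ?thesis by blast
qed

lemma exists_irrational:
  fixes f :: "real \<Rightarrow> real"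
  assumes "inj_on f U" "uncountable U"
  shows "\<exists>u\<in>U. f u \<notin> \<rat>"
proof (rule ccontr)
  assume "\<not> ?thesis"
  then have "f ` U \<subseteq> \<rat>" by blast
  then have "countable (f ` U)" using countable_rat countable_subset by blast
  then have "countable U" using assms(1) countable_image_inj_on by blast
  then show False using assms(2) by blast
qed

lemma Rn_upd: "x \<in> Rn n \<Longrightarrow> k \<in> {1..n} \<Longrightarrow> x(k := v) \<in> Rn n"
  unfolding Rn_def by auto

lemma tendsto_fun_iff:
  fixes f :: "'a \<Rightarrow> nat \<Rightarrow> real"
  shows "(f \<longlongrightarrow> l) F \<longleftrightarrow> (\<forall>i. ((\<lambda>c. f c i) \<longlongrightarrow> l i) F)"
proof -
  have "(f \<longlongrightarrow> l) F \<longleftrightarrow> limitin (product_topology (\<lambda>i. euclidean) UNIV) f l F"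
    by (simp add: euclidean_product_topology)
  also have "\<dots> \<longleftrightarrow> (\<forall>i. ((\<lambda>c. f c i) \<longlongrightarrow> l i) F)"
    by (simp add: limitin_componentwise)
  finally show ?thesis .
qed

lemma closure_crit:
  fixes C :: "(nat \<Rightarrow> real) set"
  assumes cl: "closed C" and z: "z \<in> Rn n"
    and H: "\<And>e. e > 0 \<Longrightarrow> \<exists>y\<in>C. y \<in> Rn n \<and> (\<forall>k\<in>{1..n}. \<bar>y k - z k\<bar> < e)"
  shows "z \<in> C"
proof -
  have "\<forall>N::nat. \<exists>y. y \<in> C \<and> y \<in> Rn n \<and> (\<forall>k\<in>{1..n}. \<bar>y k - z k\<bar> < 1 / (real N + 1))"
  proof
    fix N :: nat
    have "1 / (real N + 1) > 0" by simp
    then show "\<exists>y. y \<in> C \<and> y \<in> Rn n \<and> (\<forall>k\<in>{1..n}. \<bar>y k - z k\<bar> < 1 / (real N + 1))"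
      using H by blast
  qed
  then obtain Y where Y: "\<And>N. Y N \<in> C" "\<And>N. Y N \<in> Rn n"
    "\<And>N k. k \<in> {1..n} \<Longrightarrow> \<bar>Y N k - z k\<bar> < 1 / (real N + 1)"
    by metis
  have "Y \<longlonglongrightarrow> z"
  proof (subst tendsto_fun_iff, intro allI)
    fix i
    show "(\<lambda>N. Y N i) \<longlonglongrightarrow> z i"
    proof (cases "i \<in> {1..n}")
      case False
      then have "\<And>N. Y N i = z i" using Y(2) z unfolding Rn_def by auto
      then show ?thesis by simp
    next
      case True
      show ?thesis
      proof (rule LIMSEQ_I)
        fix r :: real assume r: "r > 0"
        obtain M :: nat where M: "inverse r < real M" using reals_Archimedean2 by blast
        show "\<exists>no. \<forall>N\<ge>no. norm (Y N i - z i) < r"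
        proof (intro exI allI impI)
          fix N assume "M \<le> N"
          then have "inverse r < real N + 1" using M by linarith
          then have "1 / (real N + 1) < r" using r
            by (metis inverse_eq_divide inverse_less_imp_less inverse_inverse_eq)
          then show "norm (Y N i - z i) < r" using Y(3)[OF True, of N] by simp
        qed
      qed
    qed
  qed
  moreover have "eventually (\<lambda>N. Y N \<in> C) sequentially" using Y(1) by simp
  ultimately show ?thesis using Lim_in_closed_set[OF cl, of Y sequentially z] by simp
qed

lemma step_approx:
  fixes y t g :: real
  assumes g: "g \<noteq> 0" and s: "(t - y) * g \<ge> 0"
  shows "\<exists>N::nat. \<bar>y + real N * g - t\<bar> < \<bar>g\<bar>"
proof -
  define q where "q = (t - y) / g"
  have qeq: "q = ((t - y) * g) / (g * g)" using g unfolding q_def by simp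
  have "g * g > 0" using g by (metis not_real_square_gt_zero)
  have "((t - y) * g) / (g * g) \<ge> 0" using s \<open>g * g > 0\<close> by (rule divide_nonneg_pos)
  then have q0: "q \<ge> 0" using qeq by linarith
  define N where "N = nat \<lfloor>q\<rfloor>"
  have N1: "real N \<le> q" "q < real N + 1" unfolding N_def using q0 by linarith+
  have "t - y = q * g" unfolding q_def using g by simp
  then have "y + real N * g - t = (real N - q) * g" by (simp add: algebra_simps)
  then have "\<bar>y + real N * g - t\<bar> = (q - real N) * \<bar>g\<bar>" using N1 by (simp add: abs_mult)
  also have "\<dots> < \<bar>g\<bar>" using N1 g by simp
  finally show ?thesis by blast
qed

locale invC = sig +
  fixes n :: nat and C :: "(nat \<Rightarrow> real) set"
  assumes closedC: "closed C"
    and invC: "\<And>k l x. k \<in> {1..n} \<Longrightarrow> l \<in> {1..n} \<Longrightarrow> k \<noteq> l \<Longrightarrow> x \<in> C \<Longrightarrow> Aop \<sigma> k l x \<in> C"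
begin

lemma iterC:
  assumes x: "x \<in> C" and kl: "k \<in> {1..n}" "l \<in> {1..n}" "k \<noteq> l"
  shows "x(k := x k + real N * gg \<sigma> k l (x l)) \<in> C"
proof (induction N)
  case 0
  then show ?case using x by simp
next
  case (Suc N)
  let ?y = "x(k := x k + real N * gg \<sigma> k l (x l))"
  have eq: "Aop \<sigma> k l ?y = x(k := x k + real (Suc N) * gg \<sigma> k l (x l))"
    unfolding Aop_def using kl(3) by (simp add: algebra_simps)
  from invC[OF kl Suc] show ?case unfolding eq .
qed

lemma tune1:
  assumes y: "y \<in> C" and kl: "k \<in> {1..n}" "l \<in> {1..n}" "k \<noteq> l"
    and g: "gg \<sigma> k l (y l) \<noteq> 0" and s: "(t - y k) * gg \<sigma> k l (y l) \<ge> 0"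
  shows "\<exists>v. y(k := v) \<in> C \<and> \<bar>v - t\<bar> < \<bar>gg \<sigma> k l (y l)\<bar>"
proof -
  obtain N :: nat where N: "\<bar>y k + real N * gg \<sigma> k l (y l) - t\<bar> < \<bar>gg \<sigma> k l (y l)\<bar>"
    using step_approx[OF g s] by blast
  show ?thesis using iterC[OF y kl, of N] N by blast
qed

lemma adj:
  assumes y: "y \<in> C" "y \<in> Rn n" and kl: "k \<in> {1..n}" "l \<in> {1..n}" "m \<in> {1..n}"
    "k \<noteq> l" "k \<noteq> m" "l \<noteq> m"
    and ab: "gg \<sigma> k l (y l) * gg \<sigma> k m (y m) < 0"
    and irr: "gg \<sigma> k l (y l) / gg \<sigma> k m (y m) \<notin> \<rat>"
  shows "y(k := t) \<in> C"
proof (rule closure_crit[OF closedC Rn_upd[OF y(2) kl(1)]])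
  fix e :: real assume e: "e > 0"
  let ?a = "gg \<sigma> k l (y l)" and ?b = "gg \<sigma> k m (y m)"
  obtain a b :: nat where ab': "\<bar>real a * ?a + real b * ?b - (t - y k)\<bar> < e"
    using density[OF ab irr e] by blast
  define y1 where "y1 = y(k := y k + real b * ?b)"
  have y1: "y1 \<in> C" unfolding y1_def using iterC[OF y(1) kl(1) kl(3) kl(5)] .
  have y1l: "y1 l = y l" unfolding y1_def using kl by simp
  define y2 where "y2 = y1(k := y1 k + real a * gg \<sigma> k l (y1 l))"
  have y2: "y2 \<in> C" unfolding y2_def using iterC[OF y1 kl(1) kl(2) kl(4)] .
  have y2eq: "y2 = y(k := y k + real b * ?b + real a * ?a)" unfolding y2_def y1_def using y1l y1_def
    by (simp add: fun_eq_iff)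
  show "\<exists>y'\<in>C. y' \<in> Rn n \<and> (\<forall>i\<in>{1..n}. \<bar>y' i - (y(k := t)) i\<bar> < e)"
  proof (intro bexI[OF _ y2] conjI ballI)
    show "y2 \<in> Rn n" unfolding y2eq using Rn_upd[OF y(2) kl(1)] .
    fix i assume "i \<in> {1..n}"
    show "\<bar>y2 i - (y(k := t)) i\<bar> < e"
      using ab' e unfolding y2eq by (cases "i = k") (auto simp: algebra_simps)
  qed
qed


lemma tuneSet:
  assumes fin: "finite K" and KP: "K \<inter> {P, Ng} = {}" and Kn: "K \<subseteq> {1..n}"
    and PN: "P \<in> {1..n}" "Ng \<in> {1..n}"
    and y: "y \<in> C" "y P > 0" "y Ng < 0"
    and bP: "\<forall>k. \<bar>gg \<sigma> k P (y P)\<bar> < \<eta>" and bN: "\<forall>k. \<bar>gg \<sigma> k Ng (y Ng)\<bar> < \<eta>"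
  shows "\<exists>y'\<in>C. (\<forall>k\<in>K. \<bar>y' k - z k\<bar> < \<eta>) \<and> (\<forall>k. k \<notin> K \<longrightarrow> y' k = y k)"
  using fin KP Kn
proof (induction K rule: finite_induct)
  case empty
  then show ?case using y(1) by auto
next
  case (insert x F)
  then obtain y1 where y1: "y1 \<in> C" "\<forall>k\<in>F. \<bar>y1 k - z k\<bar> < \<eta>" "\<forall>k. k \<notin> F \<longrightarrow> y1 k = y k"
    by auto
  have xPN: "x \<noteq> P" "x \<noteq> Ng" "x \<in> {1..n}" using insert.prems by auto
  have y1P: "y1 P = y P" "y1 Ng = y Ng" using y1(3) insert.prems by auto
  obtain v where v: "y1(x := v) \<in> C" "\<bar>v - z x\<bar> < \<eta>"
  proof (cases "z x \<ge> y1 x")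
    case True
    have g: "gg \<sigma> x P (y1 P) > 0" using y1P y(2) gg_pos by simp
    then have "(z x - y1 x) * gg \<sigma> x P (y1 P) \<ge> 0" using True by simp
    then obtain v where "y1(x := v) \<in> C" "\<bar>v - z x\<bar> < \<bar>gg \<sigma> x P (y1 P)\<bar>"
      using tune1[OF y1(1) xPN(3) PN(1) xPN(1)] g by fastforce
    then show ?thesis using that bP y1P by (metis less_trans)
  next
    case False
    have g: "gg \<sigma> x Ng (y1 Ng) < 0" using y1P y(3) gg_neg by simp
    then have "(z x - y1 x) * gg \<sigma> x Ng (y1 Ng) \<ge> 0" using False
      by (simp add: mult_nonpos_nonpos)
    then obtain v where "y1(x := v) \<in> C" "\<bar>v - z x\<bar> < \<bar>gg \<sigma> x Ng (y1 Ng)\<bar>"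
      using tune1[OF y1(1) xPN(3) PN(2) xPN(2)] g by fastforce
    then show ?thesis using that bN y1P by (metis less_trans)
  qed
  show ?case
  proof (intro bexI[OF _ v(1)] conjI ballI allI impI)
    fix k assume "k \<in> insert x F"
    then show "\<bar>(y1(x := v)) k - z k\<bar> < \<eta>" using v(2) y1(2) by (cases "k = x") auto
  next
    fix k assume "k \<notin> insert x F"
    then show "(y1(x := v)) k = y k" using y1(3) by auto
  qed
qed

end

locale posC = invC +
  fixes P Ng :: nat and q :: "nat \<Rightarrow> real"
  assumes PN: "P \<in> {1..n}" "Ng \<in> {1..n}" "P \<noteq> Ng" and qPN: "q P = 0" "q Ng = 0"
    and HP: "\<And>e. e > 0 \<Longrightarrow> \<exists>y\<in>C. y \<in> Rn n \<and> (\<forall>k\<in>{1..n}. \<bar>y k - q k\<bar> < e) \<and> y P > 0 \<and> y Ng < 0"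
begin

lemma F1:
  assumes z: "z \<in> Rn n" "z P = 0" "z Ng \<ge> 0"
  shows "z \<in> C"
proof (rule closure_crit[OF closedC z(1)])
  fix e :: real assume e: "e > 0"
  obtain d where d: "d > 0" "\<forall>k l t. \<bar>t\<bar> < d \<longrightarrow> \<bar>gg \<sigma> k l t\<bar> < e" using gg_small[OF e] by blast
  define d' where "d' = min d e"
  have d': "d' > 0" "d' \<le> d" "d' \<le> e" unfolding d'_def using d e by auto
  obtain y where y: "y \<in> C" "y \<in> Rn n" "\<forall>k\<in>{1..n}. \<bar>y k - q k\<bar> < d'" "y P > 0" "y Ng < 0"
    using HP[OF d'(1)] by blast
  have yP: "\<bar>y P\<bar> < d'" "\<bar>y Ng\<bar> < d'" using y(3) PN(1,2) qPN by (metis diff_zero)+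
  have bP: "\<forall>k. \<bar>gg \<sigma> k P (y P)\<bar> < e" using d(2) yP d' by auto
  have bN: "\<forall>k. \<bar>gg \<sigma> k Ng (y Ng)\<bar> < e" using d(2) yP d' by auto
  define K where "K = {1..n} - {P, Ng}"
  obtain y1 where y1: "y1 \<in> C" "\<forall>k\<in>K. \<bar>y1 k - z k\<bar> < e" "\<forall>k. k \<notin> K \<longrightarrow> y1 k = y k"
    using tuneSet[of K P Ng y e z] y PN bP bN unfolding K_def by auto
  have y1P: "y1 P = y P" "y1 Ng = y Ng" using y1(3) unfolding K_def by auto
  have g: "gg \<sigma> Ng P (y1 P) > 0" using y1P y(4) gg_pos by simp
  then have "(z Ng - y1 Ng) * gg \<sigma> Ng P (y1 P) \<ge> 0" using y1P y(5) z(3) by simp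
  then obtain v where v: "y1(Ng := v) \<in> C" "\<bar>v - z Ng\<bar> < \<bar>gg \<sigma> Ng P (y1 P)\<bar>"
    using tune1[OF y1(1) PN(2) PN(1)] PN(3) g by fastforce
  have ve: "\<bar>v - z Ng\<bar> < e" using v(2) bP y1P by (metis less_trans)
  show "\<exists>y'\<in>C. y' \<in> Rn n \<and> (\<forall>k\<in>{1..n}. \<bar>y' k - z k\<bar> < e)"
  proof (intro bexI[OF _ v(1)] conjI ballI)
    show "y1(Ng := v) \<in> Rn n" using y(2) y1(3) PN unfolding Rn_def K_def by auto
    fix k assume k: "k \<in> {1..n}"
    show "\<bar>(y1(Ng := v)) k - z k\<bar> < e"
    proof (cases "k = Ng")
      case True then show ?thesis using ve by simp
    next
      case False
      show ?thesis
      proof (cases "k = P")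
        case True then show ?thesis using False y1P yP z(2) d' by simp
      next
        case False2: False
        then have "k \<in> K" using k False unfolding K_def by auto
        then show ?thesis using y1(2) False by simp
      qed
    qed
  qed
qed

lemma F2:
  assumes z: "z \<in> Rn n" "z Ng = w" "z P = gg \<sigma> P Ng w" and w: "w > 0"
  shows "z \<in> C"
proof -
  have z0: "z(P := 0) \<in> C" using F1[of "z(P := 0)"] Rn_upd[OF z(1) PN(1)] PN(3) z(2) w by auto
  have "Aop \<sigma> P Ng (z(P := 0)) = z" unfolding Aop_def using PN(3) z(2,3) by (auto simp: fun_eq_iff)
  then show ?thesis using invC[OF PN(1) PN(2) PN(3) z0] by simp
qed


lemma ratio_inj:
  assumes "c \<noteq> 0"
  shows "inj_on (\<lambda>t. gg \<sigma> k l t / c) U"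
proof (rule inj_onI)
  fix a b assume "gg \<sigma> k l a / c = gg \<sigma> k l b / c"
  then have "gg \<sigma> k l a = gg \<sigma> k l b" using assms by simp
  then show "a = b" using gg_inj by (simp add: inj_eq)
qed

lemma caseNeg:
  assumes x: "x \<in> Rn n" "x P > 0" "x Ng > 0" and m0: "m0 \<in> {1..n}" "m0 \<noteq> P" "m0 \<noteq> Ng"
    and e: "x m0 < 0"
  shows "x \<in> C"
proof -
  have gPe: "gg \<sigma> P m0 (x m0) < 0" "gg \<sigma> Ng m0 (x m0) < 0" using e gg_neg by auto
  have claim: "x(Ng := t, P := s) \<in> C"
    if t: "t > 0" "gg \<sigma> P Ng t / gg \<sigma> P m0 (x m0) \<notin> \<rat>" for t s
  proof -
    have inj: "inj_on (\<lambda>w. gg \<sigma> Ng P (gg \<sigma> P Ng w) / gg \<sigma> Ng m0 (x m0)) {0<..<1}"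
    proof (rule inj_onI)
      fix a b assume "gg \<sigma> Ng P (gg \<sigma> P Ng a) / gg \<sigma> Ng m0 (x m0) = gg \<sigma> Ng P (gg \<sigma> P Ng b) / gg \<sigma> Ng m0 (x m0)"
      then have "gg \<sigma> Ng P (gg \<sigma> P Ng a) = gg \<sigma> Ng P (gg \<sigma> P Ng b)" using gPe by simp
      then show "a = b" using gg_inj by (simp add: inj_eq)
    qed
    obtain w where w: "w \<in> {0<..<1}" "gg \<sigma> Ng P (gg \<sigma> P Ng w) / gg \<sigma> Ng m0 (x m0) \<notin> \<rat>"
      using exists_irrational[OF inj] uncountable_open_interval[of 0 1] by auto
    define z0 where "z0 = x(Ng := w, P := gg \<sigma> P Ng w)"
    have z0R: "z0 \<in> Rn n" unfolding z0_def using x(1) PN by (intro Rn_upd) auto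
    have z0v: "z0 Ng = w" "z0 P = gg \<sigma> P Ng w" "z0 m0 = x m0" unfolding z0_def using PN m0 by auto
    have z0C: "z0 \<in> C" using F2[OF z0R z0v(1,2)] w(1) by simp
    have gw: "gg \<sigma> Ng P (z0 P) > 0" using z0v w(1) gg_pos by simp
    have z1C: "z0(Ng := t) \<in> C"
      by (rule adj[OF z0C z0R PN(2) PN(1) m0(1) PN(3)[symmetric] m0(3)[symmetric] m0(2)[symmetric]])
         (use gw gPe z0v w in \<open>auto simp: mult_pos_neg\<close>)
    have z1R: "z0(Ng := t) \<in> Rn n" using Rn_upd[OF z0R PN(2)] .
    have gt: "gg \<sigma> P Ng t > 0" using t gg_pos by simp
    have "(z0(Ng := t))(P := s) \<in> C"
      by (rule adj[OF z1C z1R PN(1) PN(2) m0(1) PN(3) m0(2)[symmetric] m0(3)[symmetric]])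
         (use gt gPe z0v t PN(3) m0 in \<open>auto simp: mult_pos_neg\<close>)
    moreover have "(z0(Ng := t))(P := s) = x(Ng := t, P := s)" unfolding z0_def using PN(3)
      by (auto simp: fun_eq_iff)
    ultimately show ?thesis by simp
  qed
  show ?thesis
  proof (rule closure_crit[OF closedC x(1)])
    fix e :: real assume e: "e > 0"
    obtain t where t: "t \<in> {x Ng<..<x Ng + e}" "gg \<sigma> P Ng t / gg \<sigma> P m0 (x m0) \<notin> \<rat>"
      using exists_irrational[OF ratio_inj[of "gg \<sigma> P m0 (x m0)" P Ng "{x Ng<..<x Ng + e}"]]
        uncountable_open_interval[of "x Ng" "x Ng + e"] gPe e by auto
    have tpos: "t > 0" using t(1) x(3) by simp
    have "x(Ng := t, P := x P) \<in> C" using claim[OF tpos t(2)] .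
    moreover have "x(Ng := t, P := x P) = x(Ng := t)" using PN(3) by (auto simp: fun_eq_iff)
    ultimately have C1: "x(Ng := t) \<in> C" by simp
    show "\<exists>y\<in>C. y \<in> Rn n \<and> (\<forall>k\<in>{1..n}. \<bar>y k - x k\<bar> < e)"
    proof (intro bexI[OF _ C1] conjI ballI)
      show "x(Ng := t) \<in> Rn n" using Rn_upd[OF x(1) PN(2)] .
      fix k show "\<bar>(x(Ng := t)) k - x k\<bar> < e" using t(1) e by auto
    qed
  qed
qed

lemma caseAll:
  assumes x: "x \<in> Rn n" "x P > 0" "x Ng > 0" and m0: "m0 \<in> {1..n}" "m0 \<noteq> P" "m0 \<noteq> Ng"
  shows "x \<in> C"
proof (cases "x m0 < 0")
  case True
  then show ?thesis using caseNeg[OF x m0] by simp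
next
  case False
  define \<gamma> where "\<gamma> = gg \<sigma> m0 P (x P)"
  have g: "\<gamma> > 0" unfolding \<gamma>_def using x(2) gg_pos by simp
  define N :: nat where "N = nat \<lceil>x m0 / \<gamma>\<rceil> + 1"
  have "x m0 / \<gamma> < real N" unfolding N_def by linarith
  then have "x m0 < real N * \<gamma>" using g by (simp add: divide_less_eq)
  define x' where "x' = x(m0 := x m0 - real N * \<gamma>)"
  have x'R: "x' \<in> Rn n" unfolding x'_def using Rn_upd[OF x(1) m0(1)] .
  have x'v: "x' P = x P" "x' Ng = x Ng" "x' m0 < 0" unfolding x'_def using m0 \<open>x m0 < real N * \<gamma>\<close> by auto
  have x'C: "x' \<in> C" using caseNeg[OF x'R _ _ m0] x'v x by simp
  have "x'(m0 := x' m0 + real N * gg \<sigma> m0 P (x' P)) \<in> C"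
    using iterC[OF x'C m0(1) PN(1) m0(2)] .
  moreover have "x'(m0 := x' m0 + real N * gg \<sigma> m0 P (x' P)) = x"
    unfolding x'_def \<gamma>_def using m0 by (auto simp: fun_eq_iff)
  ultimately show ?thesis by simp
qed

end

context invC
begin

lemma pos_all:
  assumes n3: "n \<ge> 3" and PN: "P \<in> {1..n}" "Ng \<in> {1..n}" "P \<noteq> Ng" and q: "q P = 0" "q Ng = 0"
    and HP: "\<And>e. e > 0 \<Longrightarrow> \<exists>y\<in>C. y \<in> Rn n \<and> (\<forall>k\<in>{1..n}. \<bar>y k - q k\<bar> < e) \<and> y P > 0 \<and> y Ng < 0"
    and x: "x \<in> Rn n" "x P > 0" "x Ng > 0"
  shows "x \<in> C"
proof -
  interpret posC \<sigma> n C P Ng q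
    using PN q HP by unfold_locales auto
  define m0 :: nat where "m0 = (if 1 \<noteq> P \<and> 1 \<noteq> Ng then 1 else if 2 \<noteq> P \<and> 2 \<noteq> Ng then 2 else 3)"
  have m0: "m0 \<in> {1..n}" "m0 \<noteq> P" "m0 \<noteq> Ng" unfolding m0_def using n3 PN(3) by auto
  show ?thesis using caseAll[OF x m0] .
qed

end

lemma neg_neg_fun [simp]: "- (- (y :: nat \<Rightarrow> real)) = y"
  by (rule ext) simp

lemma neg_invC:
  assumes "invC \<sigma> n C"
  shows "invC \<sigma> n {y. - y \<in> C}"
proof -
  interpret invC \<sigma> n C by fact
  show ?thesis
  proof unfold_locales
    have cont: "continuous_on UNIV (uminus :: (nat \<Rightarrow> real) \<Rightarrow> _)"
      by (intro continuous_on_coordinatewise_then_product) (simp add: continuous_on_minus)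
    have "closed (uminus -` C)" by (rule closed_vimage[OF closedC cont])
    moreover have "uminus -` C = {y. - y \<in> C}" by (simp add: vimage_def)
    ultimately show "closed {y. - y \<in> C}" by simp
  next
    fix k l x assume kl: "k \<in> {1..n}" "l \<in> {1..n}" "k \<noteq> l" and x: "x \<in> {y. - y \<in> C}"
    have "Aop \<sigma> k l (- x) \<in> C" using invC[OF kl] x by simp
    moreover have "Aop \<sigma> k l (- x) = - Aop \<sigma> k l x"
    proof (rule ext)
      fix i show "Aop \<sigma> k l (- x) i = (- Aop \<sigma> k l x) i"
        unfolding Aop_def by (cases "i = k") (simp_all add: gg_odd)
    qed
    ultimately show "Aop \<sigma> k l x \<in> {y. - y \<in> C}" by simp
  qed
qed

theorem lemma5:
  fixes \<sigma> :: "real \<Rightarrow> real" and n i j :: nat and B :: "(nat \<Rightarrow> real) set" and p :: "nat \<Rightarrow> real"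
  assumes "n \<ge> 3"
    and "strict_mono \<sigma>" and "\<forall>t. \<sigma> (- t) = - \<sigma> t"
    and "homeomorphism UNIV UNIV \<sigma> (inv \<sigma>)"
    and "1 \<le> i" and "i < j" and "j \<le> n"
    and "B \<subseteq> Rn n"
    and "\<forall>x\<in>B. x i * x j < 0"
    and "p \<in> closure B" and "p i = 0" and "p j = 0"
  shows "{x \<in> Rn n. x i * x j > 0} \<subseteq> closure (MonImg \<sigma> n B)"
proof
  note n3 = assms(1) and BR = assms(8) and Bij = assms(9) and pB = assms(10) and pij = assms(11,12)
  interpret sig \<sigma> using assms(2-4) by unfold_locales
  define S where "S = MonImg \<sigma> n B"
  define C where "C = closure S"
  have ij: "i \<in> {1..n}" "j \<in> {1..n}" "i \<noteq> j" using assms(5-7) by auto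
  have BC: "B \<subseteq> C"
  proof
    fix y assume "y \<in> B"
    then have "y = id y \<and> id \<in> Mon \<sigma> n \<and> y \<in> B" using Mon_id[of \<sigma> n] by simp
    then have "y \<in> S" unfolding S_def MonImg_def by blast
    then show "y \<in> C" unfolding C_def using closure_subset by blast
  qed
  interpret iC: invC \<sigma> n C
  proof unfold_locales
    show "closed C" unfolding C_def by simp
    fix k l x assume kl: "k \<in> {1..n}" "l \<in> {1..n}" "k \<noteq> l" and x: "x \<in> C"
    have "Aop \<sigma> k l ` S \<subseteq> S"
    proof
      fix z assume "z \<in> Aop \<sigma> k l ` S"
      then obtain m y where my: "m \<in> Mon \<sigma> n" "y \<in> B" "z = Aop \<sigma> k l (m y)"
        unfolding S_def MonImg_def by blast
      have "Aop \<sigma> k l \<circ> m \<in> Mon \<sigma> n" using Aop_Mon[OF my(1) kl] .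
      moreover have "z = (Aop \<sigma> k l \<circ> m) y" using my by simp
      ultimately show "z \<in> S" unfolding S_def MonImg_def using my by blast
    qed
    then have "Aop \<sigma> k l ` S \<subseteq> closure S" using closure_subset by blast
    then have "Aop \<sigma> k l ` closure S \<subseteq> closure S"
      using image_closure_subset[of S "Aop \<sigma> k l" "closure S"] Aop_cont continuous_on_subset by blast
    then show "Aop \<sigma> k l x \<in> C" using x unfolding C_def by blast
  qed
  have HB: "\<exists>y\<in>B. \<forall>k\<in>{1..n}. \<bar>y k - p k\<bar> < e" if e: "e > 0" for e
  proof -
    define U where "U = (\<Inter>k\<in>{1..n}. (\<lambda>y::nat\<Rightarrow>real. y k) -` {p k - e <..< p k + e})"
    have "open ((\<lambda>y::nat\<Rightarrow>real. y k) -` {p k - e <..< p k + e})" for k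
    proof -
      have "open ((\<lambda>y::nat\<Rightarrow>real. y k) -` {p k - e <..< p k + e} \<inter> UNIV)"
        using continuous_on_open_vimage[of UNIV "\<lambda>y::nat\<Rightarrow>real. y k"] by simp
      then show ?thesis by simp
    qed
    then have "open U" unfolding U_def by (intro open_INT) auto
    moreover have "p \<in> U" unfolding U_def using e by auto
    ultimately have "U \<inter> B \<noteq> {}" using pB open_Int_closure_eq_empty[of U B] by blast
    then obtain y where "y \<in> U" "y \<in> B" by blast
    then show ?thesis unfolding U_def by (intro bexI[of _ y]) (auto simp: abs_less_iff)
  qed
  define Pat where "Pat = (\<lambda>(C'::(nat\<Rightarrow>real) set) P Ng q. \<forall>e>0. \<exists>y\<in>C'. y \<in> Rn n \<and>
     (\<forall>k\<in>{1..n}. \<bar>y k - q k\<bar> < e) \<and> y P > 0 \<and> y Ng < 0)"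
  have pat: "Pat C i j p \<or> Pat C j i p"
  proof (rule ccontr)
    assume "\<not> ?thesis"
    then obtain e1 e2 where e1: "e1 > 0" "\<not> (\<exists>y\<in>C. y \<in> Rn n \<and> (\<forall>k\<in>{1..n}. \<bar>y k - p k\<bar> < e1) \<and> y i > 0 \<and> y j < 0)"
      and e2: "e2 > 0" "\<not> (\<exists>y\<in>C. y \<in> Rn n \<and> (\<forall>k\<in>{1..n}. \<bar>y k - p k\<bar> < e2) \<and> y j > 0 \<and> y i < 0)"
      unfolding Pat_def by auto
    obtain y where y: "y \<in> B" "\<forall>k\<in>{1..n}. \<bar>y k - p k\<bar> < min e1 e2" using HB[of "min e1 e2"] e1 e2 by auto
    have yC: "y \<in> C" "y \<in> Rn n" using y BC BR by auto
    have "y i * y j < 0" using Bij y by auto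
    then have "(y i > 0 \<and> y j < 0) \<or> (y j > 0 \<and> y i < 0)" by (auto simp: mult_less_0_iff)
    moreover have "\<forall>k\<in>{1..n}. \<bar>y k - p k\<bar> < e1" "\<forall>k\<in>{1..n}. \<bar>y k - p k\<bar> < e2"
      using y(2) by auto
    ultimately show False using e1(2) e2(2) yC by blast
  qed
  have negC: "invC \<sigma> n {y. - y \<in> C}" using neg_invC iC.invC_axioms by blast
  have patneg: "Pat {y. - y \<in> C} Ng P (- p)" if pc: "Pat C P Ng p" for P Ng
    unfolding Pat_def
  proof (intro allI impI)
    fix e :: real assume "e > 0"
    then obtain y where y: "y \<in> C" "y \<in> Rn n" "\<forall>k\<in>{1..n}. \<bar>y k - p k\<bar> < e" "y P > 0" "y Ng < 0"
      using pc unfolding Pat_def by blast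
    show "\<exists>y\<in>{y. - y \<in> C}. y \<in> Rn n \<and> (\<forall>k\<in>{1..n}. \<bar>y k - (- p) k\<bar> < e) \<and> y Ng > 0 \<and> y P < 0"
    proof (intro bexI[of _ "- y"] conjI ballI)
      show "- y \<in> Rn n" using y(2) unfolding Rn_def by auto
      fix k assume "k \<in> {1..n}"
      then show "\<bar>(- y) k - (- p) k\<bar> < e" using y(3) by (simp add: abs_minus_commute)
    qed (use y in auto)
  qed
  fix x assume "x \<in> {x \<in> Rn n. x i * x j > 0}"
  then have x: "x \<in> Rn n" "x i * x j > 0" by auto
  have pn: "p i = 0" "p j = 0" "(- p) i = 0" "(- p) j = 0" using pij by auto
  show "x \<in> closure (MonImg \<sigma> n B)"
  proof (cases "x i > 0")
    case True
    then have xj: "x j > 0" using x(2) by (simp add: zero_less_mult_iff)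
    from pat have "x \<in> C"
    proof
      assume pc: "Pat C i j p"
      have H: "\<exists>y\<in>C. y \<in> Rn n \<and> (\<forall>k\<in>{1..n}. \<bar>y k - p k\<bar> < e) \<and> y i > 0 \<and> y j < 0" if "e > 0" for e
        using pc that unfolding Pat_def by blast
      show "x \<in> C" by (rule iC.pos_all[OF n3 ij pn(1,2) H x(1) True xj])
    next
      assume pc: "Pat C j i p"
      have H: "\<exists>y\<in>C. y \<in> Rn n \<and> (\<forall>k\<in>{1..n}. \<bar>y k - p k\<bar> < e) \<and> y j > 0 \<and> y i < 0" if "e > 0" for e
        using pc that unfolding Pat_def by blast
      show "x \<in> C" by (rule iC.pos_all[OF n3 ij(2,1) ij(3)[symmetric] pn(2,1) H x(1) xj True])
    qed
    then show ?thesis unfolding C_def S_def .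
  next
    case False
    then have xi: "x i < 0" using x(2) by (cases "x i = 0") auto
    then have xj: "x j < 0" using x(2) by (simp add: zero_less_mult_iff)
    have mx: "- x \<in> Rn n" "(- x) i > 0" "(- x) j > 0" using x(1) xi xj unfolding Rn_def by auto
    from pat have "- x \<in> {y. - y \<in> C}"
    proof
      assume "Pat C i j p"
      then have pc: "Pat {y. - y \<in> C} j i (- p)" by (rule patneg)
      have H: "\<exists>y\<in>{y. - y \<in> C}. y \<in> Rn n \<and> (\<forall>k\<in>{1..n}. \<bar>y k - (- p) k\<bar> < e) \<and> y j > 0 \<and> y i < 0" if "e > 0" for e
        using pc that unfolding Pat_def by blast
      show ?thesis by (rule invC.pos_all[OF negC n3 ij(2,1) ij(3)[symmetric] pn(4,3) H mx(1) mx(3) mx(2)])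
    next
      assume "Pat C j i p"
      then have pc: "Pat {y. - y \<in> C} i j (- p)" by (rule patneg)
      have H: "\<exists>y\<in>{y. - y \<in> C}. y \<in> Rn n \<and> (\<forall>k\<in>{1..n}. \<bar>y k - (- p) k\<bar> < e) \<and> y i > 0 \<and> y j < 0" if "e > 0" for e
        using pc that unfolding Pat_def by blast
      show ?thesis by (rule invC.pos_all[OF negC n3 ij pn(3,4) H mx(1) mx(2) mx(3)])
    qed
    then show ?thesis unfolding C_def S_def by simp
  qed
qed

end
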